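(* Let $\alpha>0$, $\beta>0$, $D>0$, $W\ge0$ and $T\ge W+1$. Let $X=[-D/2,D/2]$ and $x_0=0$, and let $0<\nu\le D$. Let $\theta_1=\dots=\theta_W=0$, let $\theta_{W+1}$ satisfy $\mathbb P(\theta_{W+1}=\nu/2)=\mathbb P(\theta_{W+1}=-\nu/2)=1/2$, and let $\theta_t=\theta_{W+1}$ for $W+2\le t\le T$. Let $f_t(x)=\frac\alpha2(x-\theta_t)^2$ and $x^*=\arg\min_{x\in X^T}\sum_{t=1}^T\big(f_t(x_t)+\frac\beta2(x_t-x_{t-1})^2\big)$. Then for any online deterministic algorithm $\mathcal A$ with prediction window $W$, $$\mathbb E|x_1^{\mathcal A}-x_1^*|^2\ge\frac{a_{1,1+W}^2\nu^2}{4},$$ where $a_{1,1+W}$ is the $(1,1+W)$ entry of $A=H^{-1}$.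
   Context: Online deterministic algorithm with prediction window $W$: $x_t^{\mathcal A}=\mathcal A_t(I_t)$, where $\mathcal A_t$ is deterministic and $I_t$ consists of fixed initial knowledge together with $f_1,\dots,f_{\min(t+W-1,T)}$. In particular, $x_1^{\mathcal A}$ depends only on $\theta_1,\dots,\theta_W$. $H\in\mathbb R^{T\times T}$ is the symmetric tridiagonal matrix with diagonal entries $1+2\beta/\alpha$ (the last one being $1+\beta/\alpha$) and off-diagonal entries $-\beta/\alpha$. It satisfies $x^*=H^{-1}\theta$. *)

theory Defs
  imports "HOL-Probability.Probability" "Jordan_Normal_Form.Gauss_Jordan_Elimination"
begin

(* Tridiagonal matrix H (0-based indices 0..T-1) *)
definition Hmat :: "real \<Rightarrow> real \<Rightarrow> nat \<Rightarrow> real mat" where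
  "Hmat \<alpha> \<beta> T = mat T T (\<lambda>(i,j).
      if i = j then (if i = T - 1 then 1 + \<beta>/\<alpha> else 1 + 2*\<beta>/\<alpha>)
      else if i = j + 1 \<or> j = i + 1 then - \<beta>/\<alpha> else 0)"

definition Amat :: "real \<Rightarrow> real \<Rightarrow> nat \<Rightarrow> real mat" where
  "Amat \<alpha> \<beta> T = the (mat_inverse (Hmat \<alpha> \<beta> T))"

definition total_cost :: "real \<Rightarrow> real \<Rightarrow> nat \<Rightarrow> (nat \<Rightarrow> real) \<Rightarrow> (nat \<Rightarrow> real) \<Rightarrow> real" where
  "total_cost \<alpha> \<beta> T \<theta> x = (\<Sum>t=1..T. \<alpha>/2 * (x t - \<theta> t)^2
        + \<beta>/2 * (x t - (if t = 1 then 0 else x (t - 1)))^2)"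

definition feasible :: "real \<Rightarrow> nat \<Rightarrow> (nat \<Rightarrow> real) \<Rightarrow> bool" where
  "feasible D T x \<longleftrightarrow> (\<forall>t\<in>{1..T}. x t \<in> {-D/2..D/2})"

definition is_opt :: "real \<Rightarrow> real \<Rightarrow> real \<Rightarrow> nat \<Rightarrow> (nat \<Rightarrow> real) \<Rightarrow> (nat \<Rightarrow> real) \<Rightarrow> bool" where
  "is_opt \<alpha> \<beta> D T \<theta> x \<longleftrightarrow> feasible D T x \<and>
     (\<forall>y. feasible D T y \<longrightarrow> total_cost \<alpha> \<beta> T \<theta> x \<le> total_cost \<alpha> \<beta> T \<theta> y)"

definition theta_inst :: "nat \<Rightarrow> real \<Rightarrow> nat \<Rightarrow> real" where
  "theta_inst W s t = (if t \<le> W then 0 else s)"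

definition f_inst :: "real \<Rightarrow> nat \<Rightarrow> real \<Rightarrow> nat \<Rightarrow> real \<Rightarrow> real" where
  "f_inst \<alpha> W s t x = \<alpha>/2 * (x - theta_inst W s t)^2"

end

theory Submission imports Defs "Jordan_Normal_Form.Determinant" begin

definition prv :: "(nat \<Rightarrow> real) \<Rightarrow> nat \<Rightarrow> real" where
  "prv y t = (if t = 1 then 0 else y (t - 1))"

definition stat :: "real \<Rightarrow> real \<Rightarrow> nat \<Rightarrow> (nat \<Rightarrow> real) \<Rightarrow> (nat \<Rightarrow> real) \<Rightarrow> bool" where
  "stat \<alpha> \<beta> T y \<theta> \<longleftrightarrow> (\<forall>t\<in>{1..T}. \<alpha>*(y t - \<theta> t) + \<beta>*(y t - prv y t)
       - (if t < T then \<beta>*(y (t+1) - y t) else 0) = 0)"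

lemma tc_prv: "total_cost \<alpha> \<beta> T \<theta> x = (\<Sum>t=1..T. \<alpha>/2 * (x t - \<theta> t)^2 + \<beta>/2 * (x t - prv x t)^2)"
  unfolding total_cost_def prv_def by simp

lemma by_parts:
  "(\<Sum>t=1..T. p t * (d t - prv d t)) = (\<Sum>t=1..T. d t * p t) - (\<Sum>t\<in>{1..<T}. d t * p (t+1))"
proof (induction T)
  case 0 then show ?case by simp
next
  case (Suc T)
  show ?case
  proof (cases "T = 0")
    case True
    have "(\<Sum>t=1..Suc 0. p t * (d t - prv d t)) = p 1 * d 1" by (simp add: prv_def)
    moreover have "(\<Sum>t=1..Suc 0. d t * p t) = d 1 * p 1" by simp
    moreover have "{1..<Suc 0} = ({}::nat set)" by simp
    ultimately show ?thesis unfolding True by (metis add.commute diff_zero mult.commute sum.empty)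
  next
    case False
    have e: "{1..<Suc T} = insert T {1..<T}" using False by auto
    have "(\<Sum>t=1..Suc T. p t * (d t - prv d t)) = (\<Sum>t=1..T. p t * (d t - prv d t)) + p (Suc T) * (d (Suc T) - d T)"
      using False by (simp add: prv_def)
    also have "\<dots> = (\<Sum>t=1..Suc T. d t * p t) - (\<Sum>t\<in>{1..<Suc T}. d t * p (t+1))"
      using Suc e by (simp add: algebra_simps)
    finally show ?thesis .
  qed
qed

lemma by_parts2:
  "(\<Sum>t=1..T. p t * (d t - prv d t)) = (\<Sum>t=1..T. d t * (p t - (if t < T then p (t+1) else 0)))"
proof -
  have "(\<Sum>t=1..T. d t * (p t - (if t < T then p (t+1) else 0)))
      = (\<Sum>t=1..T. d t * p t) - (\<Sum>t=1..T. (if t < T then d t * p (t+1) else 0))"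
    unfolding sum_subtractf[symmetric] by (rule sum.cong) (auto simp: algebra_simps)
  also have "(\<Sum>t=1..T. (if t < T then d t * p (t+1) else 0)) = (\<Sum>t\<in>{1..<T}. d t * p (t+1))"
    by (rule sum.mono_neutral_cong_right) auto
  finally show ?thesis using by_parts by simp
qed

lemma sqexp: "\<alpha>/2*((a+e)-c)^2 + \<beta>/2*((a+e)-(b+f))^2 = (\<alpha>/2*(a-c)^2 + \<beta>/2*(a-b)^2) + (\<alpha>/2*e^2 + \<beta>/2*(e-f)^2) + \<alpha>*(a-c)*e + \<beta>*((a-b)*(e-f))" for a::real
  by (simp add: power2_eq_square algebra_simps)

lemma expand:
  assumes "stat \<alpha> \<beta> T y \<theta>"
  shows "total_cost \<alpha> \<beta> T \<theta> (\<lambda>t. y t + d t) = total_cost \<alpha> \<beta> T \<theta> y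
     + (\<Sum>t=1..T. \<alpha>/2 * (d t)^2 + \<beta>/2 * (d t - prv d t)^2)"
proof -
  let ?Dy = "\<lambda>t. y t - prv y t"
  have pr: "prv (\<lambda>t. y t + d t) t = prv y t + prv d t" for t by (simp add: prv_def)
  have "total_cost \<alpha> \<beta> T \<theta> (\<lambda>t. y t + d t) = (\<Sum>t=1..T. (\<alpha>/2 * (y t - \<theta> t)^2 + \<beta>/2 * (y t - prv y t)^2)
      + (\<alpha>/2 * (d t)^2 + \<beta>/2 * (d t - prv d t)^2) + (\<alpha> * (y t - \<theta> t) * d t) + \<beta> * (?Dy t * (d t - prv d t)))"
    unfolding tc_prv pr by (rule sum.cong[OF refl], rule sqexp)
  also have "\<dots> = total_cost \<alpha> \<beta> T \<theta> y + (\<Sum>t=1..T. \<alpha>/2 * (d t)^2 + \<beta>/2 * (d t - prv d t)^2)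
      + ((\<Sum>t=1..T. \<alpha> * (y t - \<theta> t) * d t) + \<beta> * (\<Sum>t=1..T. ?Dy t * (d t - prv d t)))"
    unfolding tc_prv by (simp add: sum.distrib sum_distrib_left)
  also have "(\<Sum>t=1..T. ?Dy t * (d t - prv d t)) = (\<Sum>t=1..T. d t * (?Dy t - (if t < T then ?Dy (t+1) else 0)))"
    by (rule by_parts2)
  also have "(\<Sum>t=1..T. \<alpha> * (y t - \<theta> t) * d t) + \<beta> * \<dots>
     = (\<Sum>t=1..T. d t * (\<alpha>*(y t - \<theta> t) + \<beta>*(y t - prv y t) - (if t < T then \<beta>*(y (t+1) - y t) else 0)))"
    unfolding sum_distrib_left sum.distrib[symmetric]
  proof (rule sum.cong)
    fix t assume "t \<in> {1..T}"
    then have p1: "prv y (t+1) = y t" by (simp add: prv_def)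
    show "\<alpha> * (y t - \<theta> t) * d t + \<beta> * (d t * (y t - prv y t - (if t < T then y (t + 1) - prv y (t + 1) else 0)))
      = d t * (\<alpha> * (y t - \<theta> t) + \<beta> * (y t - prv y t) - (if t < T then \<beta> * (y (t + 1) - y t) else 0))"
      unfolding p1 by (cases "t < T") (simp_all add: algebra_simps)
  qed simp
  also have "\<dots> = 0" using assms unfolding stat_def by simp
  finally show ?thesis by simp
qed

lemma qnonneg: "\<alpha> > 0 \<Longrightarrow> \<beta> > 0 \<Longrightarrow> (\<Sum>t=1..T. \<alpha>/2 * (d t)^2 + \<beta>/2 * (d t - prv d t)^2) \<ge> 0"
  by (intro sum_nonneg) auto

lemma ymin:
  assumes "stat \<alpha> \<beta> T y \<theta>" "\<alpha> > 0" "\<beta> > 0"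
  shows "total_cost \<alpha> \<beta> T \<theta> y \<le> total_cost \<alpha> \<beta> T \<theta> z"
proof -
  have "z = (\<lambda>t. y t + (z t - y t))" by simp
  then have "total_cost \<alpha> \<beta> T \<theta> z = total_cost \<alpha> \<beta> T \<theta> y
     + (\<Sum>t=1..T. \<alpha>/2 * ((z t - y t))^2 + \<beta>/2 * ((z t - y t) - prv (\<lambda>t. z t - y t) t)^2)"
    using expand[OF assms(1), of "\<lambda>t. z t - y t"] by simp
  then show ?thesis using qnonneg[OF assms(2,3), where T=T and d="\<lambda>t. z t - y t"] by linarith
qed

lemma uniq:
  assumes "stat \<alpha> \<beta> T y \<theta>" "\<alpha> > 0" "\<beta> > 0" "total_cost \<alpha> \<beta> T \<theta> x \<le> total_cost \<alpha> \<beta> T \<theta> y"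
    and t: "t \<in> {1..T}"
  shows "x t = y t"
proof -
  let ?d = "\<lambda>t. x t - y t"
  have "total_cost \<alpha> \<beta> T \<theta> x = total_cost \<alpha> \<beta> T \<theta> y
     + (\<Sum>t=1..T. \<alpha>/2 * (?d t)^2 + \<beta>/2 * (?d t - prv ?d t)^2)"
    using expand[OF assms(1), of ?d] by simp
  then have le: "(\<Sum>t=1..T. \<alpha>/2 * (?d t)^2 + \<beta>/2 * (?d t - prv ?d t)^2) \<le> 0" using assms(4) by simp
  have "(\<Sum>t=1..T. \<alpha>/2 * (?d t)^2 + \<beta>/2 * (?d t - prv ?d t)^2) = 0"
    using le qnonneg[OF assms(2,3), where T=T and d="?d"] by linarith
  then have "\<alpha>/2 * (?d t)^2 + \<beta>/2 * (?d t - prv ?d t)^2 = 0"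
    using t assms(2,3) by (subst (asm) sum_nonneg_eq_0_iff) auto
  moreover have "\<alpha>/2 * (?d t)^2 \<ge> 0" using assms(2) by simp
  moreover have "\<beta>/2 * (?d t - prv ?d t)^2 \<ge> 0" using assms(3) by simp
  ultimately have "\<alpha>/2 * (?d t)^2 = 0" by linarith
  then show ?thesis using assms(2) by simp
qed

definition clip :: "real \<Rightarrow> real \<Rightarrow> real" where
  "clip D u = max (-D/2) (min (D/2) u)"

lemma clip_lip: "\<bar>clip D u - clip D v\<bar> \<le> \<bar>u - v\<bar>"
  unfolding clip_def by (auto simp: max_def min_def)

lemma sq_mono_abs: "\<bar>a\<bar> \<le> \<bar>b\<bar> \<Longrightarrow> (a::real)^2 \<le> b^2"
  by (metis abs_ge_zero power2_abs power_mono)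

lemma clip_cost:
  assumes "D > 0" "\<alpha> > 0" "\<beta> > 0" "\<And>t. t \<in> {1..T} \<Longrightarrow> \<bar>\<theta> t\<bar> \<le> D/2"
  shows "total_cost \<alpha> \<beta> T \<theta> (\<lambda>t. clip D (z t)) \<le> total_cost \<alpha> \<beta> T \<theta> z"
  unfolding tc_prv
proof (rule sum_mono)
  fix t assume t: "t \<in> {1..T}"
  have c\<theta>: "clip D (\<theta> t) = \<theta> t" using assms(4)[OF t] unfolding clip_def by auto
  have a: "(clip D (z t) - \<theta> t)^2 \<le> (z t - \<theta> t)^2"
    by (rule sq_mono_abs) (metis c\<theta> clip_lip)
  have c0: "clip D 0 = 0" using assms(1) unfolding clip_def by auto
  have "prv (\<lambda>t. clip D (z t)) t = clip D (prv z t)" using c0 by (simp add: prv_def)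
  then have b: "(clip D (z t) - prv (\<lambda>t. clip D (z t)) t)^2 \<le> (z t - prv z t)^2"
    by (simp add: sq_mono_abs clip_lip)
  show "\<alpha>/2 * (clip D (z t) - \<theta> t)^2 + \<beta>/2 * (clip D (z t) - prv (\<lambda>t. clip D (z t)) t)^2
     \<le> \<alpha>/2 * (z t - \<theta> t)^2 + \<beta>/2 * (z t - prv z t)^2"
    using a b assms(2,3) by (intro add_mono mult_left_mono) auto
qed

lemma xopt_eq:
  assumes "is_opt \<alpha> \<beta> D T \<theta> x" "stat \<alpha> \<beta> T y \<theta>" "D > 0" "\<alpha> > 0" "\<beta> > 0"
    "\<And>t. t \<in> {1..T} \<Longrightarrow> \<bar>\<theta> t\<bar> \<le> D/2" "t \<in> {1..T}"
  shows "x t = y t"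
proof -
  have f: "feasible D T (\<lambda>t. clip D (y t))" unfolding feasible_def clip_def using assms(3) by auto
  have "total_cost \<alpha> \<beta> T \<theta> x \<le> total_cost \<alpha> \<beta> T \<theta> (\<lambda>t. clip D (y t))"
    using assms(1) f unfolding is_opt_def by blast
  also have "\<dots> \<le> total_cost \<alpha> \<beta> T \<theta> y" using clip_cost assms by blast
  finally show ?thesis using uniq assms by blast
qed

lemma abs_cost:
  assumes "\<alpha> > 0" "\<beta> > 0" "\<And>t. t \<in> {1..T} \<Longrightarrow> \<theta> t \<ge> 0"
  shows "total_cost \<alpha> \<beta> T \<theta> (\<lambda>t. \<bar>z t\<bar>) \<le> total_cost \<alpha> \<beta> T \<theta> z"
  unfolding tc_prv
proof (rule sum_mono)
  fix t assume t: "t \<in> {1..T}"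
  have a: "(\<bar>z t\<bar> - \<theta> t)^2 \<le> (z t - \<theta> t)^2"
    by (rule sq_mono_abs) (use assms(3)[OF t] in auto)
  have "prv (\<lambda>t. \<bar>z t\<bar>) t = \<bar>prv z t\<bar>" by (simp add: prv_def)
  then have b: "(\<bar>z t\<bar> - prv (\<lambda>t. \<bar>z t\<bar>) t)^2 \<le> (z t - prv z t)^2"
    by (simp add: sq_mono_abs abs_triangle_ineq3)
  show "\<alpha>/2 * (\<bar>z t\<bar> - \<theta> t)^2 + \<beta>/2 * (\<bar>z t\<bar> - prv (\<lambda>t. \<bar>z t\<bar>) t)^2
     \<le> \<alpha>/2 * (z t - \<theta> t)^2 + \<beta>/2 * (z t - prv z t)^2"
    using a b assms(1,2) by (intro add_mono mult_left_mono) auto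
qed

lemma stat_nonneg:
  assumes "stat \<alpha> \<beta> T y \<theta>" "\<alpha> > 0" "\<beta> > 0" "\<And>t. t \<in> {1..T} \<Longrightarrow> \<theta> t \<ge> 0" "t \<in> {1..T}"
  shows "y t \<ge> 0"
proof -
  have "\<bar>y t\<bar> = y t" using uniq[OF assms(1,2,3) abs_cost[OF assms(2,3,4)] assms(5)] .
  then show ?thesis by (metis abs_ge_zero)
qed


lemma H_carrier: "Hmat \<alpha> \<beta> T \<in> carrier_mat T T"
  unfolding Hmat_def by simp

lemma sum_pred_delta: "(\<Sum>j\<in>{0..<(T::nat)}. if j + 1 = n then g j else 0) = (if 0 < n \<and> n \<le> T then g (n - 1) else (0::real))"
proof (cases n)
  case 0 then show ?thesis by simp
next
  case (Suc k)
  have "(\<Sum>j\<in>{0..<T}. if j + 1 = n then g j else 0) = (\<Sum>j\<in>{0..<T}. if j = k then g j else 0)"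
    using Suc by (intro sum.cong) auto
  also have "\<dots> = (if k \<in> {0..<T} then g k else 0)" by (rule sum.delta) simp
  finally show ?thesis using Suc by auto
qed

lemma H_mulvec:
  assumes v: "v \<in> carrier_vec T" and i: "i < T"
  shows "(Hmat \<alpha> \<beta> T *\<^sub>v v) $ i = v$i + (\<beta>/\<alpha>) * ((v$i - (if i = 0 then 0 else v$(i-1)))
            - (if i + 1 < T then v$(i+1) - v$i else 0))"
proof -
  define c where "c = \<beta>/\<alpha>"
  let ?c = c
  let ?dg = "if i = T - 1 then 1 + c else 1 + 2*c"
  have dv: "dim_vec v = T" using v by simp
  have "(Hmat \<alpha> \<beta> T *\<^sub>v v) $ i = (\<Sum>j\<in>{0..<T}. Hmat \<alpha> \<beta> T $$ (i,j) * v $ j)"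
    using i H_carrier[of \<alpha> \<beta> T] dv by (simp add: scalar_prod_def)
  also have "\<dots> = (\<Sum>j\<in>{0..<T}. (if j = i then ?dg * v$j else 0) + (if j + 1 = i then - ?c * v$j else 0)
                    + (if j = i + 1 then - ?c * v$j else 0))"
    using i by (intro sum.cong) (auto simp: Hmat_def c_def)
  also have "\<dots> = ?dg * v$i + (if 0 < i \<and> i \<le> T then - ?c * v$(i-1) else 0) + (if i + 1 < T then - ?c * v$(i+1) else 0)"
    unfolding sum.distrib sum_pred_delta using i by (simp add: sum.delta)
  also have "\<dots> = v$i + c * ((v$i - (if i = 0 then 0 else v$(i-1)))
            - (if i + 1 < T then v$(i+1) - v$i else 0))"
    using i by (auto simp: algebra_simps)
  finally show ?thesis unfolding c_def .
qed

lemma stat_of_mulvec: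
  assumes "\<alpha> > 0" "v \<in> carrier_vec T" "\<And>i. i < T \<Longrightarrow> (Hmat \<alpha> \<beta> T *\<^sub>v v) $ i = \<theta> (i+1)"
  shows "stat \<alpha> \<beta> T (\<lambda>t. v $ (t-1)) \<theta>"
  unfolding stat_def
proof
  fix t assume t: "t \<in> {1..T}"
  define i where "i = t - 1"
  have ti: "t = i + 1" "i < T" using t unfolding i_def by auto
  have e: "v$i + (\<beta>/\<alpha>) * ((v$i - (if i = 0 then 0 else v$(i-1)))
            - (if i + 1 < T then v$(i+1) - v$i else 0)) = \<theta> t"
    using H_mulvec[OF assms(2) ti(2), of \<alpha> \<beta>] assms(3)[OF ti(2)] ti(1) by simp
  then have e2: "\<alpha> * v$i + \<beta> * ((v$i - (if i = 0 then 0 else v$(i-1)))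
            - (if i + 1 < T then v$(i+1) - v$i else 0)) = \<alpha> * \<theta> t"
    using assms(1) by (simp add: field_simps)
  have pv: "prv (\<lambda>t. v $ (t-1)) t = (if i = 0 then 0 else v$(i-1))"
    using ti by (simp add: prv_def)
  show "\<alpha>*(v $ (t-1) - \<theta> t) + \<beta>*(v $ (t-1) - prv (\<lambda>t. v $ (t-1)) t)
       - (if t < T then \<beta>*(v $ (t+1-1) - v $ (t-1)) else 0) = 0"
    unfolding pv using e2 ti by (cases "i + 1 < T") (auto simp: algebra_simps)
qed

lemma stat_zero: "stat \<alpha> \<beta> T (\<lambda>_. 0) (\<lambda>_. 0)"
  unfolding stat_def prv_def by simp

lemma H_det:
  assumes "\<alpha> > 0" "\<beta> > 0"
  shows "Determinant.det (Hmat \<alpha> \<beta> T) \<noteq> 0"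
proof
  assume "Determinant.det (Hmat \<alpha> \<beta> T) = 0"
  then obtain v where v: "v \<in> carrier_vec T" "v \<noteq> 0\<^sub>v T" "Hmat \<alpha> \<beta> T *\<^sub>v v = 0\<^sub>v T"
    using det_0_iff_vec_prod_zero[OF H_carrier] by blast
  have st: "stat \<alpha> \<beta> T (\<lambda>t. v $ (t-1)) (\<lambda>_. 0)"
    by (rule stat_of_mulvec[OF assms(1) v(1)]) (use v(3) in simp)
  have "v = 0\<^sub>v T"
  proof (rule eq_vecI)
    fix i assume "i < dim_vec (0\<^sub>v T :: real vec)"
    then have i: "i < T" by simp
    have le: "total_cost \<alpha> \<beta> T (\<lambda>_. 0) (\<lambda>t. v $ (t-1)) \<le> total_cost \<alpha> \<beta> T (\<lambda>_. 0) (\<lambda>_. 0)"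
      by (rule ymin[OF st assms])
    have "v $ (i+1-1) = 0"
      using uniq[OF stat_zero assms le, of "i+1"] i by simp
    then show "v $ i = 0\<^sub>v T $ i" using i by simp
  qed (use v in simp)
  with v(2) show False by simp
qed

lemma A_inv:
  assumes "\<alpha> > 0" "\<beta> > 0"
  shows "Hmat \<alpha> \<beta> T * Amat \<alpha> \<beta> T = 1\<^sub>m T \<and> Amat \<alpha> \<beta> T \<in> carrier_mat T T"
proof -
  have u: "Hmat \<alpha> \<beta> T \<in> Units (ring_mat TYPE(real) T undefined)"
    by (rule det_non_zero_imp_unit[OF H_carrier H_det[OF assms]])
  have "mat_inverse (Hmat \<alpha> \<beta> T) \<noteq> None"
    using mat_inverse(1)[OF H_carrier, of \<alpha> \<beta> T undefined] u by blast
  then obtain B where B: "mat_inverse (Hmat \<alpha> \<beta> T) = Some B" by blast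
  then have "Amat \<alpha> \<beta> T = B" unfolding Amat_def by simp
  with mat_inverse(2)[OF H_carrier B] show ?thesis by simp
qed

definition yA :: "real \<Rightarrow> real \<Rightarrow> nat \<Rightarrow> (nat \<Rightarrow> real) \<Rightarrow> nat \<Rightarrow> real" where
  "yA \<alpha> \<beta> T \<theta> t = (Amat \<alpha> \<beta> T *\<^sub>v vec T (\<lambda>j. \<theta> (j+1))) $ (t-1)"

lemma yA_stat:
  assumes "\<alpha> > 0" "\<beta> > 0"
  shows "stat \<alpha> \<beta> T (yA \<alpha> \<beta> T \<theta>) \<theta>"
proof -
  let ?H = "Hmat \<alpha> \<beta> T" and ?A = "Amat \<alpha> \<beta> T" and ?tv = "vec T (\<lambda>j. \<theta> (j+1))"
  have HA: "?H * ?A = 1\<^sub>m T" "?A \<in> carrier_mat T T" using A_inv[OF assms] by auto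
  have vc: "?A *\<^sub>v ?tv \<in> carrier_vec T" using HA(2) by simp
  have "?H *\<^sub>v (?A *\<^sub>v ?tv) = (?H * ?A) *\<^sub>v ?tv"
    using assoc_mult_mat_vec[OF H_carrier HA(2), of ?tv] by simp
  also have "\<dots> = ?tv" using HA(1) by simp
  finally have e: "?H *\<^sub>v (?A *\<^sub>v ?tv) = ?tv" .
  have "stat \<alpha> \<beta> T (\<lambda>t. (?A *\<^sub>v ?tv) $ (t-1)) \<theta>"
    by (rule stat_of_mulvec[OF assms(1) vc]) (use e in simp)
  then show ?thesis unfolding yA_def[abs_def] .
qed

lemma yA_1:
  assumes "\<alpha> > 0" "\<beta> > 0" "T \<ge> 1"
  shows "yA \<alpha> \<beta> T \<theta> 1 = (\<Sum>j\<in>{0..<T}. Amat \<alpha> \<beta> T $$ (0,j) * \<theta> (j+1))"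
proof -
  have c: "Amat \<alpha> \<beta> T \<in> carrier_mat T T" using A_inv[OF assms(1,2)] by auto
  show ?thesis unfolding yA_def using c assms(3) by (simp add: scalar_prod_def)
qed

theorem lemma10:
  fixes \<alpha> \<beta> D \<nu> :: real and W T :: nat
    and alg1 :: "(nat \<Rightarrow> real \<Rightarrow> real) \<Rightarrow> real"
    and xstar :: "real \<Rightarrow> nat \<Rightarrow> real"
  assumes "\<alpha> > 0" "\<beta> > 0" "D > 0" "T \<ge> W + 1" "0 < \<nu>" "\<nu> \<le> D"
    and online: "\<And>f g. (\<forall>t\<in>{1..W}. f t = g t) \<Longrightarrow> alg1 f = alg1 g"
    and opt: "\<And>s. s \<in> {\<nu>/2, -\<nu>/2} \<Longrightarrow> is_opt \<alpha> \<beta> D T (theta_inst W s) (xstar s)"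
  shows "measure_pmf.expectation (pmf_of_set {\<nu>/2, -\<nu>/2})
           (\<lambda>s. \<bar>alg1 (f_inst \<alpha> W s) - xstar s 1\<bar>^2)
         \<ge> (Amat \<alpha> \<beta> T $$ (0, W))^2 * \<nu>^2 / 4"
proof -
  note a = assms(1-6)
  define s where "s = \<nu>/2"
  have s0: "s > 0" and sD: "s \<le> D/2" using a unfolding s_def by auto
  have T1: "T \<ge> 1" "(1::nat) \<in> {1..T}" using a(4) by auto
  let ?A = "\<lambda>j. Amat \<alpha> \<beta> T $$ (0,j)"
  define S where "S = (\<Sum>j\<in>{0..<T}. ?A j * (if j + 1 \<le> W then 0 else 1))"
  have ysum: "yA \<alpha> \<beta> T (theta_inst W c) 1 = c * S" for c
    unfolding yA_1[OF a(1,2) T1(1)] S_def sum_distrib_left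
    by (intro sum.cong) (auto simp: theta_inst_def)
  have xs: "xstar c 1 = c * S" if c: "c \<in> {\<nu>/2, -\<nu>/2}" for c
  proof -
    have b: "\<bar>theta_inst W c t\<bar> \<le> D/2" for t
      using c sD s0 unfolding theta_inst_def s_def by auto
    have "xstar c 1 = yA \<alpha> \<beta> T (theta_inst W c) 1"
      by (rule xopt_eq[OF opt[OF c] yA_stat[OF a(1,2)] a(3) a(1,2) b T1(2)])
    then show ?thesis using ysum by simp
  qed
  have xp: "xstar s 1 = s * S" and xm: "xstar (-s) 1 = -s * S" using xs unfolding s_def by auto
  define e :: "nat \<Rightarrow> real" where "e t = (if t = W + 1 then 1 else 0)" for t
  define i2 :: "nat \<Rightarrow> real" where "i2 t = (if t \<le> W + 1 then 0 else 1)" for t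
  have Ae: "yA \<alpha> \<beta> T e 1 = ?A W"
  proof -
    have "yA \<alpha> \<beta> T e 1 = (\<Sum>j\<in>{0..<T}. if j = W then ?A j else 0)"
      unfolding yA_1[OF a(1,2) T1(1)] e_def by (intro sum.cong) auto
    also have "\<dots> = ?A W" using a(4) by (subst sum.delta) auto
    finally show ?thesis .
  qed
  have Ssplit: "S = yA \<alpha> \<beta> T e 1 + yA \<alpha> \<beta> T i2 1"
    unfolding yA_1[OF a(1,2) T1(1)] S_def sum.distrib[symmetric]
    by (intro sum.cong) (auto simp: e_def i2_def)
  have nA: "?A W \<ge> 0"
    using stat_nonneg[OF yA_stat[OF a(1,2)] a(1,2) _ T1(2), of e] Ae unfolding e_def by auto
  have n2: "yA \<alpha> \<beta> T i2 1 \<ge> 0"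
    using stat_nonneg[OF yA_stat[OF a(1,2)] a(1,2) _ T1(2), of i2] unfolding i2_def by auto
  have SA: "S \<ge> ?A W" using Ssplit Ae n2 by simp
  have "\<forall>t\<in>{1..W}. f_inst \<alpha> W s t = f_inst \<alpha> W (-s) t"
    by (auto intro!: ext simp: f_inst_def theta_inst_def)
  then have cc: "alg1 (f_inst \<alpha> W s) = alg1 (f_inst \<alpha> W (-s))" using online by blast
  define c where "c = alg1 (f_inst \<alpha> W s)"
  have ne: "\<nu>/2 \<noteq> -\<nu>/2" using a(5) by simp
  have E: "measure_pmf.expectation (pmf_of_set {\<nu>/2, -\<nu>/2})
           (\<lambda>s. \<bar>alg1 (f_inst \<alpha> W s) - xstar s 1\<bar>^2)
        = ((c - s*S)^2 + (c + s*S)^2) / 2"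
  proof -
    have ne2: "s \<noteq> -s" using s0 by simp
    have "measure_pmf.expectation (pmf_of_set {s, -s}) (\<lambda>s. \<bar>alg1 (f_inst \<alpha> W s) - xstar s 1\<bar>^2)
       = (\<bar>alg1 (f_inst \<alpha> W s) - xstar s 1\<bar>^2 + \<bar>alg1 (f_inst \<alpha> W (-s)) - xstar (-s) 1\<bar>^2) / 2"
      using ne2 by (subst integral_pmf_of_set) auto
    also have "\<dots> = ((c - s*S)^2 + (c + s*S)^2) / 2"
      unfolding xp xm cc[symmetric] c_def[symmetric] by (simp add: power2_abs)
    moreover have seteq: "{\<nu>/2, -\<nu>/2} = {s, -s}" unfolding s_def by simp
    ultimately show ?thesis by (simp only: seteq)
  qed
  have "(?A W)^2 * \<nu>^2 / 4 = (s * ?A W)^2" unfolding s_def by (simp add: power2_eq_square)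
  also have "\<dots> \<le> (s * S)^2" using SA nA s0 by (intro power_mono mult_left_mono) auto
  also have "\<dots> \<le> ((c - s*S)^2 + (c + s*S)^2) / 2" by (simp add: power2_eq_square algebra_simps)
  finally show ?thesis unfolding E .
qed

end
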